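(* For every $\varepsilon>0$ and integer $k\ge2$ there exists $\eta=\eta(\varepsilon,k,\Omega)>0$ such that for every $n>1/\eta$ every $\mu\in\mathcal P(\Omega^n)$ has pairwise disjoint $(\varepsilon,k)$-states $S_1,\dots,S_N$ such that $\mu(S_i)\ge\eta$ for all $i\in[N]$ and $\sum_{i=1}^N\mu(S_i)\ge1-\varepsilon$.
   Context: $\Omega$ is a fixed finite nonempty set, $\mathcal P(\mathcal X)$ the set of probability measures on a finite set $\mathcal X$, $\|\cdot\|_{TV}$ total variation. For $\mu\in\mathcal P(\Omega^n)$ and $S\subset\Omega^n$ with $\mu(S)>0$, $\mu[\cdot|S]$ is the conditional measure; for $x_1,\dots,x_k\in[n]$, $\mu_{\downarrow\{x_1,\dots,x_k\}}[\cdot|S]$ denotes the joint law of $(\boldsymbol\sigma(x_1),\dots,\boldsymbol\sigma(x_k))$ for $\boldsymbol\sigma\sim\mu[\cdot|S]$ and $\mu_{\downarrow x}[\cdot|S]$ the law of $\boldsymbol\sigma(x)$. A set $S\subset\Omega^n$ is an $(\varepsilon,k)$-state of $\mu$ if $\mu(S)>0$ and $\frac1{n^k}\sum_{x_1,\dots,x_k\in[n]}\|\mu_{\downarrow\{x_1,\dots,x_k\}}[\cdot|S]-\mu_{\downarrow x_1}[\cdot|S]\otimes\cdots\otimes\mu_{\downarrow x_k}[\cdot|S]\|_{TV}<\varepsilon$. *)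

theory Defs
  imports "HOL-Probability.Probability"
begin

text \<open>Configuration space Omega^n: maps [n] = {0..<n} to the finite type 'a,
  extensional (undefined outside {0..<n}).\<close>
definition config :: "nat \<Rightarrow> (nat \<Rightarrow> 'a::finite) set" where
  "config n = PiE {..<n} (\<lambda>_. UNIV)"

definition tv_dist :: "'b pmf \<Rightarrow> 'b pmf \<Rightarrow> real" where
  "tv_dist p q = (1/2) * (\<Sum>\<^sub>\<infinity> z. \<bar>pmf p z - pmf q z\<bar>)"

definition joint_marg :: "(nat \<Rightarrow> 'a) pmf \<Rightarrow> (nat \<Rightarrow> 'a) set \<Rightarrow> nat \<Rightarrow> (nat \<Rightarrow> nat) \<Rightarrow> (nat \<Rightarrow> 'a) pmf" where
  "joint_marg \<mu> S k xs = map_pmf (\<lambda>\<sigma>. restrict (\<lambda>j. \<sigma> (xs j)) {..<k}) (cond_pmf \<mu> S)"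

definition marg :: "(nat \<Rightarrow> 'a) pmf \<Rightarrow> (nat \<Rightarrow> 'a) set \<Rightarrow> nat \<Rightarrow> 'a pmf" where
  "marg \<mu> S x = map_pmf (\<lambda>\<sigma>. \<sigma> x) (cond_pmf \<mu> S)"

definition prod_marg :: "(nat \<Rightarrow> 'a) pmf \<Rightarrow> (nat \<Rightarrow> 'a) set \<Rightarrow> nat \<Rightarrow> (nat \<Rightarrow> nat) \<Rightarrow> (nat \<Rightarrow> 'a) pmf" where
  "prod_marg \<mu> S k xs = Pi_pmf {..<k} undefined (\<lambda>j. marg \<mu> S (xs j))"

definition is_state :: "real \<Rightarrow> nat \<Rightarrow> nat \<Rightarrow> (nat \<Rightarrow> 'a) pmf \<Rightarrow> (nat \<Rightarrow> 'a) set \<Rightarrow> bool" where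
  "is_state eps k n \<mu> S \<longleftrightarrow>
     measure_pmf.prob \<mu> S > 0 \<and>
     (1 / real n ^ k) * (\<Sum>xs \<in> PiE {..<k} (\<lambda>_. {..<n}).
         tv_dist (joint_marg \<mu> S k xs) (prod_marg \<mu> S k xs)) < eps"

end

theory Submission
  imports Defs "HOL-Analysis.Analysis"
begin



lemma finite_config: "finite (config n :: (nat \<Rightarrow> 'a::finite) set)"
  unfolding config_def by (simp add: finite_PiE)

lemma measure_cond_pmf_fin:
  assumes ne: "set_pmf p \<inter> S \<noteq> {}" and fin: "finite (set_pmf p)"
  shows "measure_pmf.prob (cond_pmf p S) A = measure_pmf.prob p (A \<inter> S) / measure_pmf.prob p S"
proof -
  have "measure_pmf.prob (cond_pmf p S) A = measure_pmf.prob (cond_pmf p S) (A \<inter> set_pmf (cond_pmf p S))"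
    by (simp add: measure_Int_set_pmf)
  also have "\<dots> = sum (pmf (cond_pmf p S)) (A \<inter> (set_pmf p \<inter> S))"
    using ne fin by (subst measure_measure_pmf_finite) auto
  also have "\<dots> = sum (\<lambda>x. pmf p x / measure_pmf.prob p S) (A \<inter> (set_pmf p \<inter> S))"
    using ne by (intro sum.cong) (auto simp: pmf_cond)
  also have "\<dots> = sum (pmf p) (A \<inter> S \<inter> set_pmf p) / measure_pmf.prob p S"
    by (simp add: sum_divide_distrib Int_ac)
  also have "sum (pmf p) (A \<inter> S \<inter> set_pmf p) = measure_pmf.prob p (A \<inter> S)"
    using fin by (subst measure_measure_pmf_finite[symmetric]) (auto simp: measure_Int_set_pmf)
  finally show ?thesis .
qed

lemma prob_disj_union:
  assumes "finite I" "disjoint_family_on A I" "(\<Union>i\<in>I. A i) = S"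
  shows "measure_pmf.prob p S = (\<Sum>i\<in>I. measure_pmf.prob p (A i))"
  using measure_pmf.finite_measure_finite_Union[of I A p] assms by simp

lemma sum_PiE_Suc:
  "(\<Sum>a\<in>PiE {..<Suc j} (\<lambda>_. (UNIV::'a::finite set)). F a) =
   (\<Sum>\<tau>\<in>PiE {..<j} (\<lambda>_. UNIV). \<Sum>\<omega>\<in>UNIV. F (\<tau>(j:=\<omega>)))"
proof -
  have e: "{..<Suc j} = insert j {..<j}" by auto
  have inj: "inj_on (\<lambda>(y, g). g(j := y)) (UNIV \<times> PiE {..<j} (\<lambda>_. (UNIV::'a set)))"
  proof (rule inj_onI, clarsimp)
    fix y g y' g' assume g: "g \<in> PiE {..<j} (\<lambda>_. UNIV)" "g' \<in> PiE {..<j} (\<lambda>_. UNIV)"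
      and eq: "g(j := y) = g'(j := y')"
    have "y = y'" using fun_cong[OF eq, of j] by simp
    moreover have "g = g'"
    proof
      fix i show "g i = g' i"
        using fun_cong[OF eq, of i] g by (cases "i = j") (auto simp: PiE_def extensional_def)
    qed
    ultimately show "y = y' \<and> g = g'" by simp
  qed
  show ?thesis
    unfolding e PiE_insert_eq
    apply (subst sum.reindex[OF inj])
    apply (subst sum.swap)
    apply (subst sum.cartesian_product)
    apply (simp add: case_prod_beta o_def)
    done
qed




definition cyl :: "(nat \<Rightarrow> nat) \<Rightarrow> nat \<Rightarrow> (nat \<Rightarrow> 'a) \<Rightarrow> (nat \<Rightarrow> 'a) set" where
  "cyl xs j \<tau> = {\<sigma>. \<forall>i<j. \<sigma> (xs i) = \<tau> i}"

definition gm :: "(nat \<Rightarrow> 'a) pmf \<Rightarrow> (nat \<Rightarrow> 'a) set \<Rightarrow> nat \<Rightarrow> 'a \<Rightarrow> real" where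
  "gm \<mu> S x \<omega> = measure_pmf.prob \<mu> (S \<inter> {\<sigma>. \<sigma> x = \<omega>})"

lemma cyl_Suc: "cyl xs (Suc j) (\<tau>(j:=\<omega>)) = cyl xs j \<tau> \<inter> {\<sigma>. \<sigma> (xs j) = \<omega>}"
  unfolding cyl_def by (auto simp: less_Suc_eq)

lemma pos_ne: "measure_pmf.prob \<mu> S > 0 \<Longrightarrow> set_pmf \<mu> \<inter> S \<noteq> {}"
  by (metis measure_Int_set_pmf measure_empty inf_commute less_irrefl)

lemma fin_supp: "set_pmf \<mu> \<subseteq> config n \<Longrightarrow> finite (set_pmf (\<mu> :: (nat \<Rightarrow> 'a::finite) pmf))"
  using finite_config finite_subset by blast

lemma gm_sum:
  "(\<Sum>\<omega>\<in>UNIV. gm \<mu> S x (\<omega>::'a::finite)) = measure_pmf.prob \<mu> S"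
  unfolding gm_def
  by (rule prob_disj_union[symmetric]) (auto simp: disjoint_family_on_def)

lemma gm_nonneg: "gm \<mu> S x \<omega> \<ge> 0" unfolding gm_def by simp

lemma pmf_joint:
  assumes supp: "set_pmf \<mu> \<subseteq> config n" and pos: "measure_pmf.prob \<mu> S > 0"
  shows "pmf (joint_marg \<mu> S k xs) a =
    (if a \<in> PiE {..<k} (\<lambda>_. UNIV) then measure_pmf.prob \<mu> (S \<inter> cyl xs k a) / measure_pmf.prob \<mu> S else 0)"
proof -
  have "pmf (joint_marg \<mu> S k xs) a = measure_pmf.prob (cond_pmf \<mu> S) ((\<lambda>\<sigma>. restrict (\<lambda>j. \<sigma> (xs j)) {..<k}) -` {a})"
    unfolding joint_marg_def by (simp add: pmf_map)
  also have "\<dots> = measure_pmf.prob \<mu> (((\<lambda>\<sigma>. restrict (\<lambda>j. \<sigma> (xs j)) {..<k}) -` {a}) \<inter> S) / measure_pmf.prob \<mu> S"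
    using pos_ne[OF pos] fin_supp[OF supp] by (rule measure_cond_pmf_fin)
  also have "((\<lambda>\<sigma>. restrict (\<lambda>j. \<sigma> (xs j)) {..<k}) -` {a}) = (if a \<in> PiE {..<k} (\<lambda>_. UNIV) then cyl xs k a else {})"
    by (auto simp: cyl_def PiE_def extensional_def restrict_def fun_eq_iff)
  finally show ?thesis by (auto simp: Int_commute)
qed

lemma pmf_marg:
  assumes supp: "set_pmf \<mu> \<subseteq> config n" and pos: "measure_pmf.prob \<mu> S > 0"
  shows "pmf (marg \<mu> S x) \<omega> = gm \<mu> S x \<omega> / measure_pmf.prob \<mu> S"
proof -
  have "pmf (marg \<mu> S x) \<omega> = measure_pmf.prob (cond_pmf \<mu> S) ((\<lambda>\<sigma>. \<sigma> x) -` {\<omega>})"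
    unfolding marg_def by (simp add: pmf_map)
  also have "\<dots> = measure_pmf.prob \<mu> (((\<lambda>\<sigma>. \<sigma> x) -` {\<omega>}) \<inter> S) / measure_pmf.prob \<mu> S"
    using pos_ne[OF pos] fin_supp[OF supp] by (rule measure_cond_pmf_fin)
  finally show ?thesis unfolding gm_def by (simp add: Int_commute vimage_def)
qed

lemma pmf_prodm:
  assumes supp: "set_pmf \<mu> \<subseteq> config n" and pos: "measure_pmf.prob \<mu> S > 0"
  shows "pmf (prod_marg \<mu> S k xs) a =
    (if a \<in> PiE {..<k} (\<lambda>_. UNIV) then (\<Prod>i<k. gm \<mu> S (xs i) (a i) / measure_pmf.prob \<mu> S) else 0)"
  unfolding prod_marg_def
  by (subst pmf_Pi) (auto simp: pmf_marg[OF supp pos] PiE_def extensional_def)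

lemma hybrid:
  fixes Jf :: "nat \<Rightarrow> (nat \<Rightarrow> 'a::finite) \<Rightarrow> real" and p :: "nat \<Rightarrow> 'a \<Rightarrow> real"
  assumes psum: "\<And>i. (\<Sum>\<omega>\<in>UNIV. p i \<omega>) = 1" and pnn: "\<And>i \<omega>. p i \<omega> \<ge> 0"
    and J0: "\<And>\<tau>. Jf 0 \<tau> = 1"
  shows "(\<Sum>a\<in>PiE {..<k} (\<lambda>_. UNIV). \<bar>Jf k a - (\<Prod>i<k. p i (a i))\<bar>)
     \<le> (\<Sum>j<k. \<Sum>\<tau>\<in>PiE {..<j} (\<lambda>_. UNIV). \<Sum>\<omega>\<in>UNIV. \<bar>Jf (Suc j) (\<tau>(j:=\<omega>)) - Jf j \<tau> * p j \<omega>\<bar>)"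
proof (induction k)
  case 0
  then show ?case by (simp add: J0)
next
  case (Suc k)
  let ?P = "\<lambda>j. PiE {..<j} (\<lambda>_. (UNIV::'a set))"
  have pr: "(\<Prod>i<Suc k. p i ((\<tau>(k:=\<omega>)) i)) = p k \<omega> * (\<Prod>i<k. p i (\<tau> i))" for \<tau> \<omega>
    by (simp add: prod.lessThan_Suc mult.commute)
  have "(\<Sum>a\<in>?P (Suc k). \<bar>Jf (Suc k) a - (\<Prod>i<Suc k. p i (a i))\<bar>)
      = (\<Sum>\<tau>\<in>?P k. \<Sum>\<omega>\<in>UNIV. \<bar>Jf (Suc k) (\<tau>(k:=\<omega>)) - p k \<omega> * (\<Prod>i<k. p i (\<tau> i))\<bar>)"
    by (simp add: sum_PiE_Suc pr mult.commute)
  also have "\<dots> \<le> (\<Sum>\<tau>\<in>?P k. \<Sum>\<omega>\<in>UNIV. \<bar>Jf (Suc k) (\<tau>(k:=\<omega>)) - Jf k \<tau> * p k \<omega>\<bar> + p k \<omega> * \<bar>Jf k \<tau> - (\<Prod>i<k. p i (\<tau> i))\<bar>)"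
  proof (intro sum_mono)
    fix \<tau> \<omega>
    have "\<bar>Jf (Suc k) (\<tau>(k:=\<omega>)) - p k \<omega> * (\<Prod>i<k. p i (\<tau> i))\<bar> \<le>
      \<bar>Jf (Suc k) (\<tau>(k:=\<omega>)) - Jf k \<tau> * p k \<omega>\<bar> + \<bar>p k \<omega> * (Jf k \<tau> - (\<Prod>i<k. p i (\<tau> i)))\<bar>"
      by (smt (verit, best) right_diff_distrib mult.commute)
    also have "\<bar>p k \<omega> * (Jf k \<tau> - (\<Prod>i<k. p i (\<tau> i)))\<bar> = p k \<omega> * \<bar>Jf k \<tau> - (\<Prod>i<k. p i (\<tau> i))\<bar>"
      using pnn[of k \<omega>] by (simp add: abs_mult)
    finally show "\<bar>Jf (Suc k) (\<tau>(k:=\<omega>)) - p k \<omega> * (\<Prod>i<k. p i (\<tau> i))\<bar> \<le>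
      \<bar>Jf (Suc k) (\<tau>(k:=\<omega>)) - Jf k \<tau> * p k \<omega>\<bar> + p k \<omega> * \<bar>Jf k \<tau> - (\<Prod>i<k. p i (\<tau> i))\<bar>" .
  qed
  also have "\<dots> = (\<Sum>\<tau>\<in>?P k. \<Sum>\<omega>\<in>UNIV. \<bar>Jf (Suc k) (\<tau>(k:=\<omega>)) - Jf k \<tau> * p k \<omega>\<bar>)
       + (\<Sum>\<tau>\<in>?P k. \<bar>Jf k \<tau> - (\<Prod>i<k. p i (\<tau> i))\<bar>)"
    by (simp add: sum.distrib sum_distrib_right[symmetric] psum)
  also have "\<dots> \<le> (\<Sum>\<tau>\<in>?P k. \<Sum>\<omega>\<in>UNIV. \<bar>Jf (Suc k) (\<tau>(k:=\<omega>)) - Jf k \<tau> * p k \<omega>\<bar>)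
       + (\<Sum>j<k. \<Sum>\<tau>\<in>?P j. \<Sum>\<omega>\<in>UNIV. \<bar>Jf (Suc j) (\<tau>(j:=\<omega>)) - Jf j \<tau> * p j \<omega>\<bar>)"
    using Suc.IH by linarith
  finally have X: "(\<Sum>a\<in>?P (Suc k). \<bar>Jf (Suc k) a - (\<Prod>i<Suc k. p i (a i))\<bar>) \<le> (\<Sum>\<tau>\<in>?P k. \<Sum>\<omega>\<in>UNIV. \<bar>Jf (Suc k) (\<tau>(k:=\<omega>)) - Jf k \<tau> * p k \<omega>\<bar>) + (\<Sum>j<k. \<Sum>\<tau>\<in>?P j. \<Sum>\<omega>\<in>UNIV. \<bar>Jf (Suc j) (\<tau>(j:=\<omega>)) - Jf j \<tau> * p j \<omega>\<bar>)" .
  show ?case by (simp only: sum.lessThan_Suc) (use X in linarith)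
qed




definition Aterm :: "(nat \<Rightarrow> 'a::finite) pmf \<Rightarrow> (nat \<Rightarrow> 'a) set \<Rightarrow> (nat \<Rightarrow> nat) \<Rightarrow> nat \<Rightarrow> nat \<Rightarrow> real" where
  "Aterm \<mu> S xs j x = (\<Sum>\<tau>\<in>PiE {..<j} (\<lambda>_. UNIV). \<Sum>\<omega>\<in>UNIV.
      \<bar>gm \<mu> (S \<inter> cyl xs j \<tau>) x \<omega> - measure_pmf.prob \<mu> (S \<inter> cyl xs j \<tau>) * gm \<mu> S x \<omega> / measure_pmf.prob \<mu> S\<bar>)"

lemma tv_finite:
  fixes p q :: "(nat \<Rightarrow> 'a) pmf"
  assumes "finite F" "\<And>a. a \<notin> F \<Longrightarrow> pmf p a = 0" "\<And>a. a \<notin> F \<Longrightarrow> pmf q a = 0"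
  shows "tv_dist p q = (1/2) * (\<Sum>a\<in>F. \<bar>pmf p a - pmf q a\<bar>)"
proof -
  have "(\<Sum>\<^sub>\<infinity> z. \<bar>pmf p z - pmf q z\<bar>) = (\<Sum>\<^sub>\<infinity> z\<in>F. \<bar>pmf p z - pmf q z\<bar>)"
    by (rule infsum_cong_neutral) (use assms in auto)
  also have "\<dots> = (\<Sum>a\<in>F. \<bar>pmf p a - pmf q a\<bar>)" using assms(1) by simp
  finally show ?thesis unfolding tv_dist_def by simp
qed

lemma D_bound:
  fixes \<mu> :: "(nat \<Rightarrow> 'a::finite) pmf"
  assumes supp: "set_pmf \<mu> \<subseteq> config n" and pos: "measure_pmf.prob \<mu> S > 0"
  shows "tv_dist (joint_marg \<mu> S k xs) (prod_marg \<mu> S k xs)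
     \<le> (1 / (2 * measure_pmf.prob \<mu> S)) * (\<Sum>j<k. Aterm \<mu> S xs j (xs j))"
proof -
  define m where "m = measure_pmf.prob \<mu> S"
  have m: "m > 0" using pos m_def by simp
  define Jf where "Jf j \<tau> = measure_pmf.prob \<mu> (S \<inter> cyl xs j \<tau>) / m" for j \<tau>
  define p where "p i \<omega> = gm \<mu> S (xs i) \<omega> / m" for i \<omega>
  have tv: "tv_dist (joint_marg \<mu> S k xs) (prod_marg \<mu> S k xs) =
     (1/2) * (\<Sum>a\<in>PiE {..<k} (\<lambda>_. UNIV). \<bar>Jf k a - (\<Prod>i<k. p i (a i))\<bar>)"
    apply (subst tv_finite[where F="PiE {..<k} (\<lambda>_. UNIV)"])
    apply (simp add: finite_PiE)
    apply (simp add: pmf_joint[OF supp pos])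
    apply (simp add: pmf_prodm[OF supp pos])
    apply (simp add: pmf_joint[OF supp pos] pmf_prodm[OF supp pos] Jf_def p_def m_def)
    done
  have psum: "(\<Sum>\<omega>\<in>UNIV. p i \<omega>) = 1" for i
    using m by (simp add: p_def sum_divide_distrib[symmetric] gm_sum m_def)
  have pnn: "p i \<omega> \<ge> 0" for i \<omega> using m by (simp add: p_def gm_nonneg)
  have J0: "Jf 0 \<tau> = 1" for \<tau> using m by (simp add: Jf_def cyl_def m_def)
  have trm: "\<bar>Jf (Suc j) (\<tau>(j:=\<omega>)) - Jf j \<tau> * p j \<omega>\<bar> =
     \<bar>gm \<mu> (S \<inter> cyl xs j \<tau>) (xs j) \<omega> - measure_pmf.prob \<mu> (S \<inter> cyl xs j \<tau>) * gm \<mu> S (xs j) \<omega> / m\<bar> / m"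
    for j \<tau> \<omega>
  proof -
    have "Jf (Suc j) (\<tau>(j:=\<omega>)) - Jf j \<tau> * p j \<omega> =
      (gm \<mu> (S \<inter> cyl xs j \<tau>) (xs j) \<omega> - measure_pmf.prob \<mu> (S \<inter> cyl xs j \<tau>) * gm \<mu> S (xs j) \<omega> / m) / m"
      using m by (simp add: Jf_def p_def cyl_Suc gm_def Int_assoc field_simps)
    then show ?thesis using m by simp
  qed
  have "tv_dist (joint_marg \<mu> S k xs) (prod_marg \<mu> S k xs) \<le>
     (1/2) * (\<Sum>j<k. \<Sum>\<tau>\<in>PiE {..<j} (\<lambda>_. UNIV). \<Sum>\<omega>\<in>UNIV. \<bar>Jf (Suc j) (\<tau>(j:=\<omega>)) - Jf j \<tau> * p j \<omega>\<bar>)"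
    unfolding tv using hybrid[of p Jf k, OF psum pnn J0] by simp
  also have "\<dots> = (1 / (2 * m)) * (\<Sum>j<k. Aterm \<mu> S xs j (xs j))"
    by (simp add: trm Aterm_def sum_divide_distrib[symmetric] m_def)
  finally show ?thesis by (simp add: m_def)
qed




lemma swap_avg:
  fixes F :: "(nat \<Rightarrow> nat) \<Rightarrow> nat \<Rightarrow> real"
  assumes jk: "j < k" and inv: "\<And>xs y x. F (xs(j:=y)) x = F xs x"
  shows "real n * (\<Sum>xs\<in>PiE {..<k} (\<lambda>_. {..<n}). F xs (xs j)) =
         (\<Sum>xs\<in>PiE {..<k} (\<lambda>_. {..<n}). \<Sum>x<n. F xs x)"
proof -
  let ?P = "PiE {..<k} (\<lambda>_. {..<n::nat})"
  define \<phi> where "\<phi> = (\<lambda>(xs::nat\<Rightarrow>nat, x::nat). (xs(j:=x), xs j))"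
  have G: "F xs x = F (xs(j:=x)) ((xs(j:=x)) j)" for xs x by (simp add: inv)
  have "(\<Sum>xs\<in>?P. \<Sum>x<n. F xs x) = (\<Sum>(xs,x)\<in>?P \<times> {..<n}. F (xs(j:=x)) ((xs(j:=x)) j))"
    unfolding sum.cartesian_product[symmetric] by (intro sum.cong refl) (simp add: inv)
  also have "\<dots> = (\<Sum>(xs,x)\<in>?P \<times> {..<n}. F xs (xs j))"
    by (rule sum.reindex_bij_witness[where i=\<phi> and j=\<phi>])
       (use jk in \<open>auto simp: \<phi>_def PiE_def extensional_def Pi_def\<close>)
  also have "\<dots> = real n * (\<Sum>xs\<in>?P. F xs (xs j))"
    by (simp add: sum.cartesian_product[symmetric] sum_distrib_left)
  finally show ?thesis by simp
qed

lemma card_P: "card (PiE {..<k} (\<lambda>_. {..<n::nat})) = n ^ k"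
  by (simp add: card_PiE)

lemma Aterm_inv: "Aterm \<mu> S (xs(j:=y)) j x = Aterm \<mu> S xs j x"
proof -
  have h: "\<And>\<tau>. cyl (xs(j:=y)) j \<tau> = cyl xs j \<tau>" by (auto simp: cyl_def)
  show ?thesis unfolding Aterm_def h ..
qed

lemma exists_good:
  fixes \<mu> :: "(nat \<Rightarrow> 'a::finite) pmf"
  assumes supp: "set_pmf \<mu> \<subseteq> config n" and pos: "measure_pmf.prob \<mu> S > 0"
    and n: "n > 0" and k: "k > 0"
    and bad: "\<not> (1 / real n ^ k) * (\<Sum>xs \<in> PiE {..<k} (\<lambda>_. {..<n}).
         tv_dist (joint_marg \<mu> S k xs) (prod_marg \<mu> S k xs)) < eps"
  shows "\<exists>xs\<in>PiE {..<k} (\<lambda>_. {..<n}). \<exists>j<k.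
      (\<Sum>x<n. Aterm \<mu> S xs j x) \<ge> 2 * measure_pmf.prob \<mu> S * real n * eps / real k"
proof (rule ccontr)
  let ?P = "PiE {..<k} (\<lambda>_. {..<n::nat})"
  define m where "m = measure_pmf.prob \<mu> S"
  have m: "m > 0" using pos m_def by simp
  define c where "c = 2 * m * real n * eps / real k"
  assume "\<not> ?thesis"
  then have lt: "\<And>xs j. xs \<in> ?P \<Longrightarrow> j < k \<Longrightarrow> (\<Sum>x<n. Aterm \<mu> S xs j x) < c"
    by (auto simp: c_def m_def not_le)
  have Pne: "?P \<noteq> {}" using n by (auto simp: PiE_eq_empty_iff)
  have "eps * real n ^ k \<le> (\<Sum>xs\<in>?P. tv_dist (joint_marg \<mu> S k xs) (prod_marg \<mu> S k xs))"
    using bad n by (simp add: field_simps)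
  also have "\<dots> \<le> (\<Sum>xs\<in>?P. (1 / (2 * m)) * (\<Sum>j<k. Aterm \<mu> S xs j (xs j)))"
    by (intro sum_mono D_bound[OF supp pos, folded m_def])
  also have "\<dots> = (1 / (2 * m)) * (\<Sum>j<k. \<Sum>xs\<in>?P. Aterm \<mu> S xs j (xs j))"
    by (subst sum.swap) (simp add: sum_distrib_left)
  also have "\<dots> = (1 / (2 * m * real n)) * (\<Sum>j<k. \<Sum>xs\<in>?P. \<Sum>x<n. Aterm \<mu> S xs j x)"
  proof -
    have "(\<Sum>xs\<in>?P. Aterm \<mu> S xs j (xs j)) = (1 / real n) * (\<Sum>xs\<in>?P. \<Sum>x<n. Aterm \<mu> S xs j x)"
      if "j < k" for j
      using swap_avg[of j k "\<lambda>xs x. Aterm \<mu> S xs j x" n, OF that Aterm_inv] n by (simp add: field_simps)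
    then show ?thesis by (simp add: sum_distrib_left)
  qed
  also have "\<dots> = (1 / (2 * m * real n)) * (\<Sum>xs\<in>?P. \<Sum>j<k. \<Sum>x<n. Aterm \<mu> S xs j x)"
    by (simp add: sum.swap[of _ "{..<k}"])
  also have "\<dots> < (1 / (2 * m * real n)) * (\<Sum>xs\<in>?P. \<Sum>j<k. c)"
  proof -
    have "(\<Sum>xs\<in>?P. \<Sum>j<k. \<Sum>x<n. Aterm \<mu> S xs j x) < (\<Sum>xs\<in>?P. \<Sum>j<k. c)"
      using Pne k n by (intro sum_strict_mono) (auto simp: finite_PiE intro!: sum_strict_mono lt)
    then show ?thesis using m n by (intro mult_strict_left_mono) auto
  qed
  also have "\<dots> = eps * real n ^ k"
    using m n k by (simp add: card_P c_def field_simps)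
  finally show False by simp
qed




definition en :: "nat \<Rightarrow> (nat \<Rightarrow> 'a::finite) pmf \<Rightarrow> (nat \<Rightarrow> 'a) set \<Rightarrow> real" where
  "en n \<mu> S = (\<Sum>x<n. \<Sum>\<omega>\<in>UNIV. (gm \<mu> S x \<omega>)\<^sup>2) / measure_pmf.prob \<mu> S"

lemma CS_weighted:
  fixes u m :: "'i \<Rightarrow> real"
  assumes mnn: "\<And>i. i \<in> I \<Longrightarrow> m i \<ge> 0" and z: "\<And>i. i \<in> I \<Longrightarrow> m i = 0 \<Longrightarrow> u i = 0"
  shows "(\<Sum>i\<in>I. \<bar>u i\<bar>)\<^sup>2 \<le> (\<Sum>i\<in>I. m i) * (\<Sum>i\<in>I. (u i)\<^sup>2 / m i)"
proof -
  have "(\<Sum>i\<in>I. \<bar>u i\<bar>) = (\<Sum>i\<in>I. sqrt (m i) * (\<bar>u i\<bar> / sqrt (m i)))"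
    using mnn z by (intro sum.cong refl) (auto simp: field_simps)
  moreover have "(\<Sum>i\<in>I. (sqrt (m i))\<^sup>2) = (\<Sum>i\<in>I. m i)"
    using mnn by (intro sum.cong) auto
  moreover have "(\<Sum>i\<in>I. (\<bar>u i\<bar> / sqrt (m i))\<^sup>2) = (\<Sum>i\<in>I. (u i)\<^sup>2 / m i)"
    using mnn by (intro sum.cong refl) (auto simp: power_divide)
  ultimately show ?thesis
    using Cauchy_Schwarz_ineq_sum[of "\<lambda>i. sqrt (m i)" "\<lambda>i. \<bar>u i\<bar> / sqrt (m i)" I] by simp
qed

lemma CS_card:
  fixes b :: "'i \<Rightarrow> real"
  shows "(\<Sum>i\<in>I. b i)\<^sup>2 \<le> real (card I) * (\<Sum>i\<in>I. (b i)\<^sup>2)"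
  using Cauchy_Schwarz_ineq_sum[of "\<lambda>i. 1" b I] by simp

lemma incr_pointwise:
  fixes g m :: "'i \<Rightarrow> real"
  assumes fin: "finite I" and gnn: "\<And>i. i \<in> I \<Longrightarrow> 0 \<le> g i" and gle: "\<And>i. i \<in> I \<Longrightarrow> g i \<le> m i"
    and M: "(\<Sum>i\<in>I. m i) > 0"
  shows "(\<Sum>i\<in>I. \<bar>g i - m i * (\<Sum>i\<in>I. g i) / (\<Sum>i\<in>I. m i)\<bar>)\<^sup>2 / (\<Sum>i\<in>I. m i)
     \<le> (\<Sum>i\<in>I. (g i)\<^sup>2 / m i) - (\<Sum>i\<in>I. g i)\<^sup>2 / (\<Sum>i\<in>I. m i)"
proof -
  define G where "G = (\<Sum>i\<in>I. g i)"
  define Mm where "Mm = (\<Sum>i\<in>I. m i)"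
  have Mp: "Mm > 0" using M Mm_def by simp
  define u where "u i = g i - m i * G / Mm" for i
  have pt: "(u i)\<^sup>2 / m i = (g i)\<^sup>2 / m i - 2 * g i * G / Mm + m i * G\<^sup>2 / Mm\<^sup>2" if "i \<in> I" for i
  proof (cases "m i = 0")
    case True
    then have "g i = 0" using gnn gle that by force
    then show ?thesis using True by (simp add: u_def)
  next
    case False
    then show ?thesis using Mp by (simp add: u_def field_simps power2_eq_square)
  qed
  have "(\<Sum>i\<in>I. (u i)\<^sup>2 / m i) = (\<Sum>i\<in>I. (g i)\<^sup>2 / m i) - 2 * G * G / Mm + Mm * G\<^sup>2 / Mm\<^sup>2"
    using pt by (simp add: sum.distrib sum_subtractf sum_divide_distrib[symmetric] sum_distrib_right[symmetric]
        G_def Mm_def)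
      (simp add: sum_distrib_left[symmetric])
  also have "\<dots> = (\<Sum>i\<in>I. (g i)\<^sup>2 / m i) - G\<^sup>2 / Mm"
    using Mp by (simp add: field_simps power2_eq_square)
  finally have eq: "(\<Sum>i\<in>I. (u i)\<^sup>2 / m i) = (\<Sum>i\<in>I. (g i)\<^sup>2 / m i) - G\<^sup>2 / Mm" .
  have cs: "(\<Sum>i\<in>I. \<bar>u i\<bar>)\<^sup>2 \<le> Mm * (\<Sum>i\<in>I. (u i)\<^sup>2 / m i)"
    unfolding Mm_def
  proof (rule CS_weighted)
    show "\<And>i. i \<in> I \<Longrightarrow> 0 \<le> m i" using gnn gle by (meson order.trans)
    show "\<And>i. i \<in> I \<Longrightarrow> m i = 0 \<Longrightarrow> u i = 0" using gnn gle by (force simp: u_def)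
  qed
  have "(\<Sum>i\<in>I. \<bar>u i\<bar>)\<^sup>2 / Mm \<le> (\<Sum>i\<in>I. (u i)\<^sup>2 / m i)"
    using cs Mp by (simp add: divide_le_eq mult.commute)
  then show ?thesis using eq by (simp add: u_def G_def Mm_def)
qed

lemma gm_le: "gm \<mu> S x \<omega> \<le> measure_pmf.prob \<mu> S"
  unfolding gm_def by (rule measure_pmf.finite_measure_mono) auto

lemma en_bounds:
  fixes \<mu> :: "(nat \<Rightarrow> 'a::finite) pmf"
  shows "0 \<le> en n \<mu> S" "en n \<mu> S \<le> real n * measure_pmf.prob \<mu> S"
proof -
  show "0 \<le> en n \<mu> S" unfolding en_def by (intro divide_nonneg_nonneg sum_nonneg) auto
  define m where "m = measure_pmf.prob \<mu> S"
  have "(\<Sum>\<omega>\<in>UNIV. (gm \<mu> S x \<omega>)\<^sup>2) \<le> (\<Sum>\<omega>\<in>UNIV. gm \<mu> S x \<omega> * m)" for x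
    by (intro sum_mono) (auto simp: power2_eq_square m_def gm_nonneg gm_le intro!: mult_left_mono)
  also have "(\<Sum>\<omega>\<in>UNIV. gm \<mu> S x \<omega> * m) = m * m" for x
    by (simp add: sum_distrib_right[symmetric] gm_sum m_def)
  finally have "(\<Sum>x<n. \<Sum>\<omega>\<in>UNIV. (gm \<mu> S x \<omega>)\<^sup>2) \<le> real n * (m * m)"
    using sum_mono[of "{..<n}" "\<lambda>x. (\<Sum>\<omega>\<in>UNIV. (gm \<mu> S x \<omega>)\<^sup>2)" "\<lambda>x. m * m"] by simp
  then show "en n \<mu> S \<le> real n * measure_pmf.prob \<mu> S"
    unfolding en_def m_def[symmetric]
    by (cases "m = 0") (auto simp: m_def divide_le_eq)
qed

lemma en_empty: "en n \<mu> {} = 0" by (simp add: en_def)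

lemma en_increment:
  fixes \<mu> :: "(nat \<Rightarrow> 'a::finite) pmf"
  assumes fin: "finite I" and disj: "disjoint_family_on A I" and un: "(\<Union>i\<in>I. A i) = S"
    and pos: "measure_pmf.prob \<mu> S > 0" and n: "n > 0"
  shows "(\<Sum>x<n. \<Sum>\<omega>\<in>UNIV. \<Sum>i\<in>I. \<bar>gm \<mu> (A i) x \<omega> - measure_pmf.prob \<mu> (A i) * gm \<mu> S x \<omega> / measure_pmf.prob \<mu> S\<bar>)\<^sup>2
       / (real n * real CARD('a) * measure_pmf.prob \<mu> S)
     \<le> (\<Sum>i\<in>I. en n \<mu> (A i)) - en n \<mu> S"
proof -
  define m where "m = measure_pmf.prob \<mu> S"
  have m: "m > 0" using pos m_def by simp
  define B where "B x \<omega> = (\<Sum>i\<in>I. \<bar>gm \<mu> (A i) x \<omega> - measure_pmf.prob \<mu> (A i) * gm \<mu> S x \<omega> / m\<bar>)" for x \<omega>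
  have msum: "(\<Sum>i\<in>I. measure_pmf.prob \<mu> (A i)) = m"
    unfolding m_def by (rule prob_disj_union[symmetric, OF fin disj un])
  have gsum: "(\<Sum>i\<in>I. gm \<mu> (A i) x \<omega>) = gm \<mu> S x \<omega>" for x \<omega>
    unfolding gm_def
    by (rule prob_disj_union[symmetric, OF fin]) (use disj un in \<open>auto simp: disjoint_family_on_def\<close>)
  have pw: "(B x \<omega>)\<^sup>2 / m \<le> (\<Sum>i\<in>I. (gm \<mu> (A i) x \<omega>)\<^sup>2 / measure_pmf.prob \<mu> (A i)) - (gm \<mu> S x \<omega>)\<^sup>2 / m" for x \<omega>
    using incr_pointwise[OF fin, of "\<lambda>i. gm \<mu> (A i) x \<omega>" "\<lambda>i. measure_pmf.prob \<mu> (A i)"] m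
    by (simp add: gm_nonneg gm_le msum gsum B_def)
  have "(\<Sum>i\<in>I. en n \<mu> (A i)) - en n \<mu> S =
      (\<Sum>(x,\<omega>)\<in>{..<n} \<times> UNIV. (\<Sum>i\<in>I. (gm \<mu> (A i) x \<omega>)\<^sup>2 / measure_pmf.prob \<mu> (A i)) - (gm \<mu> S x \<omega>)\<^sup>2 / m)"
    unfolding en_def m_def[symmetric] sum.cartesian_product[symmetric]
    by (simp add: sum_subtractf sum_divide_distrib sum.swap[of _ I])
  also have "\<dots> \<ge> (\<Sum>(x,\<omega>)\<in>{..<n} \<times> (UNIV::'a set). (B x \<omega>)\<^sup>2 / m)"
    by (intro sum_mono) (use pw in auto)
  finally have s1: "(\<Sum>(x,\<omega>)\<in>{..<n} \<times> (UNIV::'a set). (B x \<omega>)\<^sup>2) / m \<le> (\<Sum>i\<in>I. en n \<mu> (A i)) - en n \<mu> S"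
    by (simp add: sum_divide_distrib case_prod_beta)
  have cs: "(\<Sum>(x,\<omega>)\<in>{..<n} \<times> (UNIV::'a set). B x \<omega>)\<^sup>2 \<le> real n * real CARD('a) * (\<Sum>(x,\<omega>)\<in>{..<n} \<times> (UNIV::'a set). (B x \<omega>)\<^sup>2)"
    using CS_card[of "\<lambda>p. B (fst p) (snd p)" "{..<n} \<times> (UNIV::'a set)"]
    by (simp add: case_prod_beta card_cartesian_product)
  have pnq: "real n * real CARD('a) > 0" using n by simp
  have "(\<Sum>(x,\<omega>)\<in>{..<n} \<times> (UNIV::'a set). B x \<omega>)\<^sup>2 / (real n * real CARD('a) * m)
      \<le> (\<Sum>(x,\<omega>)\<in>{..<n} \<times> (UNIV::'a set). (B x \<omega>)\<^sup>2) / m"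
    using cs pnq m by (simp add: divide_le_eq field_simps)
  with s1 show ?thesis
    unfolding m_def[symmetric] B_def[symmetric] sum.cartesian_product[symmetric] by simp
qed




lemma prob_C1:
  assumes "set_pmf \<mu> \<subseteq> C" shows "measure_pmf.prob \<mu> C = 1"
  using assms by (subst measure_pmf.prob_eq_1) (auto intro!: AE_pmfI)

lemma cyl_disj:
  fixes S :: "(nat \<Rightarrow> 'a) set"
  shows "disjoint_family_on (\<lambda>\<tau>. S \<inter> cyl xs j \<tau>) (PiE {..<j} (\<lambda>_. UNIV))"
proof (unfold disjoint_family_on_def, intro ballI impI)
  fix \<tau> \<tau>' :: "nat \<Rightarrow> 'a" assume t: "\<tau> \<in> PiE {..<j} (\<lambda>_. UNIV)" "\<tau>' \<in> PiE {..<j} (\<lambda>_. UNIV)" "\<tau> \<noteq> \<tau>'"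
  have "\<exists>i. \<tau> i \<noteq> \<tau>' i" using t(3) by (auto simp: fun_eq_iff)
  then obtain i where i: "\<tau> i \<noteq> \<tau>' i" by blast
  have "i < j"
  proof (rule ccontr)
    assume "\<not> i < j"
    then have "\<tau> i = undefined" "\<tau>' i = undefined" using t(1,2) by (auto simp: PiE_def extensional_def)
    then show False using i by simp
  qed
  then show "S \<inter> cyl xs j \<tau> \<inter> (S \<inter> cyl xs j \<tau>') = {}" using i by (auto simp: cyl_def)
qed

lemma cyl_un: "(\<Union>\<tau>\<in>PiE {..<j} (\<lambda>_. UNIV). S \<inter> cyl xs j \<tau>) = S"
proof
  show "S \<subseteq> (\<Union>\<tau>\<in>PiE {..<j} (\<lambda>_. UNIV). S \<inter> cyl xs j \<tau>)"
  proof
    fix \<sigma> assume "\<sigma> \<in> S"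
    then have "\<sigma> \<in> S \<inter> cyl xs j (restrict (\<lambda>i. \<sigma> (xs i)) {..<j})" by (auto simp: cyl_def)
    moreover have "restrict (\<lambda>i. \<sigma> (xs i)) {..<j} \<in> PiE {..<j} (\<lambda>_. UNIV)" by simp
    ultimately show "\<sigma> \<in> (\<Union>\<tau>\<in>PiE {..<j} (\<lambda>_. UNIV). S \<inter> cyl xs j \<tau>)" by blast
  qed
qed auto

definition c0 :: "real \<Rightarrow> nat \<Rightarrow> nat \<Rightarrow> real" where
  "c0 eps k q = 4 * eps^2 / (real k ^ 2 * real q)"

lemma refine_one:
  fixes \<mu> :: "(nat \<Rightarrow> 'a::finite) pmf"
  assumes supp: "set_pmf \<mu> \<subseteq> config n" and pos: "measure_pmf.prob \<mu> S > 0"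
    and n: "n > 0" and k: "k > 0" and eps: "eps > 0"
    and bad: "\<not> is_state eps k n \<mu> S"
  shows "\<exists>xs j. j < k \<and> (\<Sum>\<tau>\<in>PiE {..<j} (\<lambda>_. UNIV). en n \<mu> (S \<inter> cyl xs j \<tau>)) - en n \<mu> S
     \<ge> c0 eps k CARD('a) * real n * measure_pmf.prob \<mu> S"
proof -
  define m where "m = measure_pmf.prob \<mu> S"
  have m: "m > 0" using pos m_def by simp
  have bad': "\<not> (1 / real n ^ k) * (\<Sum>xs \<in> PiE {..<k} (\<lambda>_. {..<n}).
         tv_dist (joint_marg \<mu> S k xs) (prod_marg \<mu> S k xs)) < eps"
    using bad pos unfolding is_state_def by simp
  obtain xs j where j: "j < k" and G: "(\<Sum>x<n. Aterm \<mu> S xs j x) \<ge> 2 * m * real n * eps / real k"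
    using exists_good[OF supp pos n k bad'] unfolding m_def by blast
  have inc: "(\<Sum>x<n. \<Sum>\<omega>\<in>UNIV. \<Sum>\<tau>\<in>PiE {..<j} (\<lambda>_. UNIV). \<bar>gm \<mu> (S \<inter> cyl xs j \<tau>) x \<omega> - measure_pmf.prob \<mu> (S \<inter> cyl xs j \<tau>) * gm \<mu> S x \<omega> / measure_pmf.prob \<mu> S\<bar>)\<^sup>2
       / (real n * real CARD('a) * measure_pmf.prob \<mu> S)
     \<le> (\<Sum>\<tau>\<in>PiE {..<j} (\<lambda>_. UNIV). en n \<mu> (S \<inter> cyl xs j \<tau>)) - en n \<mu> S"
    by (rule en_increment[OF _ cyl_disj cyl_un pos n]) (simp add: finite_PiE)
  have eqA: "(\<Sum>x<n. \<Sum>\<omega>\<in>UNIV. \<Sum>\<tau>\<in>PiE {..<j} (\<lambda>_. UNIV). \<bar>gm \<mu> (S \<inter> cyl xs j \<tau>) x \<omega> - measure_pmf.prob \<mu> (S \<inter> cyl xs j \<tau>) * gm \<mu> S x \<omega> / measure_pmf.prob \<mu> S\<bar>)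
      = (\<Sum>x<n. Aterm \<mu> S xs j x)"
    unfolding Aterm_def by (intro sum.cong refl) (rule sum.swap)
  have G0: "0 \<le> 2 * m * real n * eps / real k" using m eps by simp
  have "(2 * m * real n * eps / real k)\<^sup>2 \<le> (\<Sum>x<n. Aterm \<mu> S xs j x)\<^sup>2"
    using G G0 by (intro power_mono) auto
  then have "(2 * m * real n * eps / real k)\<^sup>2 / (real n * real CARD('a) * m)
     \<le> (\<Sum>x<n. Aterm \<mu> S xs j x)\<^sup>2 / (real n * real CARD('a) * m)"
    using m n by (intro divide_right_mono) auto
  moreover have "(2 * m * real n * eps / real k)\<^sup>2 / (real n * real CARD('a) * m)
     = c0 eps k CARD('a) * real n * m"
    using m n k by (simp add: c0_def power2_eq_square field_simps)
  ultimately have "c0 eps k CARD('a) * real n * m \<le> (\<Sum>\<tau>\<in>PiE {..<j} (\<lambda>_. UNIV). en n \<mu> (S \<inter> cyl xs j \<tau>)) - en n \<mu> S"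
    using inc unfolding m_def[symmetric] eqA[unfolded m_def[symmetric]] by linarith
  then show ?thesis using j unfolding m_def by blast
qed




definition valid :: "'x set \<Rightarrow> 'x set set \<Rightarrow> bool" where
  "valid C P \<longleftrightarrow> finite P \<and> {} \<notin> P \<and> (\<forall>T\<in>P. T \<subseteq> C) \<and> (\<forall>T\<in>P. \<forall>T'\<in>P. T \<noteq> T' \<longrightarrow> T \<inter> T' = {}) \<and> \<Union>P = C"

definition badset :: "real \<Rightarrow> nat \<Rightarrow> nat \<Rightarrow> (nat \<Rightarrow> 'a) pmf \<Rightarrow> (nat \<Rightarrow> 'a) set set \<Rightarrow> (nat \<Rightarrow> 'a) set set" where
  "badset eps k n \<mu> P = {T\<in>P. measure_pmf.prob \<mu> T > 0 \<and> \<not> is_state eps k n \<mu> T}"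

lemma total_mass:
  assumes v: "valid C P" and supp: "set_pmf \<mu> \<subseteq> C"
  shows "(\<Sum>T\<in>P. measure_pmf.prob \<mu> T) = 1"
proof -
  have "measure_pmf.prob \<mu> C = (\<Sum>T\<in>P. measure_pmf.prob \<mu> (id T))"
    using v by (intro prob_disj_union) (auto simp: valid_def disjoint_family_on_def)
  then show ?thesis using prob_C1[OF supp] by simp
qed

lemma energy_le:
  fixes \<mu> :: "(nat \<Rightarrow> 'a::finite) pmf"
  assumes v: "valid C P" and supp: "set_pmf \<mu> \<subseteq> C"
  shows "(\<Sum>T\<in>P. en n \<mu> T) \<le> real n"
proof -
  have "(\<Sum>T\<in>P. en n \<mu> T) \<le> (\<Sum>T\<in>P. real n * measure_pmf.prob \<mu> T)"
    by (intro sum_mono en_bounds)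
  also have "\<dots> = real n" using total_mass[OF v supp] by (simp add: sum_distrib_left[symmetric])
  finally show ?thesis .
qed

lemma refine_step:
  fixes \<mu> :: "(nat \<Rightarrow> 'a::finite) pmf"
  assumes supp: "set_pmf \<mu> \<subseteq> config n" and v: "valid (config n) P"
    and n: "n > 0" and k: "k > 0" and eps: "eps > 0"
    and bm: "(\<Sum>T\<in>badset eps k n \<mu> P. measure_pmf.prob \<mu> T) \<ge> eps / 2"
  shows "\<exists>P'. valid (config n) P' \<and> card P' \<le> card P * CARD('a) ^ k \<and>
     (\<Sum>T\<in>P'. en n \<mu> T) \<ge> (\<Sum>T\<in>P. en n \<mu> T) + c0 eps k CARD('a) * real n * (eps / 2)"
proof -
  define Bad where "Bad = badset eps k n \<mu> P"
  define c where "c = c0 eps k CARD('a)"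
  have c: "c \<ge> 0" unfolding c_def c0_def by simp
  have BadP: "Bad \<subseteq> P" by (auto simp: Bad_def badset_def)
  have finP: "finite P" using v by (simp add: valid_def)
  have finB: "finite Bad" using BadP finP finite_subset by blast
  have "\<forall>T\<in>Bad. \<exists>p. snd p < k \<and> (\<Sum>\<tau>\<in>PiE {..<snd p} (\<lambda>_. UNIV). en n \<mu> (T \<inter> cyl (fst p) (snd p) \<tau>)) - en n \<mu> T
     \<ge> c * real n * measure_pmf.prob \<mu> T"
  proof
    fix T assume "T \<in> Bad"
    then have "measure_pmf.prob \<mu> T > 0" "\<not> is_state eps k n \<mu> T" by (auto simp: Bad_def badset_def)
    from refine_one[OF supp this(1) n k eps this(2)] show "\<exists>p. snd p < k \<and> (\<Sum>\<tau>\<in>PiE {..<snd p} (\<lambda>_. UNIV). en n \<mu> (T \<inter> cyl (fst p) (snd p) \<tau>)) - en n \<mu> T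
     \<ge> c * real n * measure_pmf.prob \<mu> T" unfolding c_def by auto
  qed
  then obtain f where f: "\<And>T. T \<in> Bad \<Longrightarrow> snd (f T) < k \<and> (\<Sum>\<tau>\<in>PiE {..<snd (f T)} (\<lambda>_. UNIV). en n \<mu> (T \<inter> cyl (fst (f T)) (snd (f T)) \<tau>)) - en n \<mu> T
     \<ge> c * real n * measure_pmf.prob \<mu> T"
    by metis
  define I where "I T = PiE {..<snd (f T)} (\<lambda>_. (UNIV::'a set))" for T
  define pc where "pc T \<tau> = T \<inter> cyl (fst (f T)) (snd (f T)) \<tau>" for T \<tau>
  define pieces where "pieces T = pc T ` I T - {{}}" for T
  define P' where "P' = (P - Bad) \<union> (\<Union>T\<in>Bad. pieces T)"
  have finI: "finite (I T)" for T by (simp add: I_def finite_PiE)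
  have finpc: "finite (pieces T)" for T by (simp add: pieces_def finI)
  have psub: "U \<subseteq> T" "U \<noteq> {}" if "U \<in> pieces T" for U T
    using that by (auto simp: pieces_def pc_def)
  have pcdisj: "pc T \<tau> \<inter> pc T \<tau>' = {}" if "\<tau> \<in> I T" "\<tau>' \<in> I T" "\<tau> \<noteq> \<tau>'" for T \<tau> \<tau>'
    using cyl_disj[of T "fst (f T)" "snd (f T)"] that unfolding disjoint_family_on_def pc_def I_def by blast
  have pdisj: "U \<inter> U' = {}" if "U \<in> pieces T" "U' \<in> pieces T" "U \<noteq> U'" for U U' T
    using that pcdisj unfolding pieces_def by blast
  have pun: "\<Union>(pieces T) = T" for T
  proof -
    have "\<Union>(pieces T) = \<Union>(pc T ` I T)" unfolding pieces_def by blast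
    also have "\<dots> = T" unfolding pc_def I_def by (rule cyl_un)
    finally show ?thesis .
  qed
  have Q: "CARD('a) ^ snd (f T) \<le> CARD('a) ^ k" if "T \<in> Bad" for T
    using f[OF that] by (intro power_increasing) (auto simp: Suc_le_eq)
  have pcard: "card (pieces T) \<le> CARD('a) ^ k" if "T \<in> Bad" for T
  proof -
    have "card (pieces T) \<le> card (pc T ` I T)" unfolding pieces_def by (intro card_mono) (auto simp: finI)
    also have "\<dots> \<le> card (I T)" by (rule card_image_le[OF finI])
    also have "\<dots> = CARD('a) ^ snd (f T)" by (simp add: I_def card_PiE)
    finally show ?thesis using Q[OF that] by linarith
  qed
  have pen: "(\<Sum>U\<in>pieces T. en n \<mu> U) = (\<Sum>\<tau>\<in>I T. en n \<mu> (pc T \<tau>))" for T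
  proof -
    have "(\<Sum>U\<in>pieces T. en n \<mu> U) = (\<Sum>U\<in>pc T ` I T. en n \<mu> U)"
      unfolding pieces_def by (rule sum.mono_neutral_left) (auto simp: finI en_empty)
    also have "\<dots> = (\<Sum>\<tau>\<in>I T. en n \<mu> (pc T \<tau>))"
    proof (subst sum.reindex_nontrivial[OF finI])
      fix \<tau> \<tau>' assume a: "\<tau> \<in> I T" "\<tau>' \<in> I T" "\<tau> \<noteq> \<tau>'" "pc T \<tau> = pc T \<tau>'"
      have "pc T \<tau> \<inter> pc T \<tau>' = {}" using pcdisj[OF a(1-3)] .
      then have "pc T \<tau> = {}" using a(4) by simp
      then show "en n \<mu> (pc T \<tau>) = 0" by (simp add: en_empty)
    qed simp
    finally show ?thesis .
  qed
  have disjPB: "U \<inter> T = {}" if "U \<in> P - Bad" "T \<in> Bad" for U T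
  proof -
    have "U \<in> P" "T \<in> P" "U \<noteq> T" using that BadP by auto
    then show ?thesis using v unfolding valid_def by blast
  qed
  have valid': "valid (config n) P'"
    unfolding valid_def
  proof (intro conjI ballI impI)
    show "finite P'" unfolding P'_def using finP finB finpc by auto
    show "{} \<notin> P'" unfolding P'_def using v psub by (auto simp: valid_def)
  next
    fix U assume "U \<in> P'"
    then show "U \<subseteq> config n" unfolding P'_def using v psub BadP by (auto simp: valid_def) blast
  next
    fix U U' assume U: "U \<in> P'" and U': "U' \<in> P'" and ne: "U \<noteq> U'"
    show "U \<inter> U' = {}"
    proof (cases "U \<in> P - Bad")
      case True
      show ?thesis
      proof (cases "U' \<in> P - Bad")
        case True
        then show ?thesis using \<open>U \<in> P - Bad\<close> ne v by (auto simp: valid_def)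
      next
        case False
        then obtain T where "T \<in> Bad" "U' \<in> pieces T" using U' unfolding P'_def by blast
        then show ?thesis using disjPB[OF True] psub by blast
      qed
    next
      case False
      then obtain T where T: "T \<in> Bad" "U \<in> pieces T" using U unfolding P'_def by blast
      show ?thesis
      proof (cases "U' \<in> P - Bad")
        case True
        then show ?thesis using disjPB[OF True T(1)] psub[OF T(2)] by blast
      next
        case False
        then obtain T' where T': "T' \<in> Bad" "U' \<in> pieces T'" using U' unfolding P'_def by blast
        show ?thesis
        proof (cases "T = T'")
          case True then show ?thesis using pdisj T T' ne by blast
        next
          case False
          then have "T \<inter> T' = {}" using T(1) T'(1) BadP v unfolding valid_def by blast
          then show ?thesis using psub[OF T(2)] psub[OF T'(2)] by blast
        qed
      qed
    qed
  next
    have "\<Union>P' = \<Union>(P - Bad) \<union> (\<Union>T\<in>Bad. \<Union>(pieces T))" unfolding P'_def by blast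
    also have "\<dots> = \<Union>P" using pun BadP by blast
    finally show "\<Union>P' = config n" using v by (simp add: valid_def)
  qed
  have cardP': "card P' \<le> card P * CARD('a) ^ k"
  proof -
    have "card P' \<le> card (P - Bad) + card (\<Union>T\<in>Bad. pieces T)"
      unfolding P'_def by (rule card_Un_le)
    also have "card (\<Union>T\<in>Bad. pieces T) \<le> (\<Sum>T\<in>Bad. card (pieces T))"
      by (rule card_UN_le[OF finB])
    also have "\<dots> \<le> (\<Sum>T\<in>Bad. CARD('a) ^ k)" by (intro sum_mono pcard)
    also have "\<dots> = card Bad * CARD('a) ^ k" by simp
    finally have a: "card P' \<le> card (P - Bad) + card Bad * CARD('a) ^ k" by simp
    have b: "card (P - Bad) + card Bad = card P" using card_Diff_subset[OF finB BadP] card_mono[OF finP BadP] by simp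
    have q1: "CARD('a) ^ k \<ge> 1" by simp
    have "card (P - Bad) \<le> card (P - Bad) * CARD('a) ^ k" using q1 by simp
    then have "card (P - Bad) + card Bad * CARD('a) ^ k \<le> (card (P - Bad) + card Bad) * CARD('a) ^ k"
      by (simp add: algebra_simps)
    with a b show ?thesis by simp
  qed
  have "(\<Sum>T\<in>P'. en n \<mu> T) = (\<Sum>T\<in>P - Bad. en n \<mu> T) + (\<Sum>T\<in>(\<Union>T\<in>Bad. pieces T). en n \<mu> T)"
    unfolding P'_def
  proof (rule sum.union_disjoint)
    show "finite (P - Bad)" using finP by simp
    show "finite (\<Union>T\<in>Bad. pieces T)" using finB finpc by simp
    show "(P - Bad) \<inter> (\<Union>T\<in>Bad. pieces T) = {}"
    proof (rule ccontr)
      assume "(P - Bad) \<inter> (\<Union>T\<in>Bad. pieces T) \<noteq> {}"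
      then obtain U T where a: "U \<in> P - Bad" "T \<in> Bad" "U \<in> pieces T" by blast
      have "U \<inter> T = {}" using disjPB[OF a(1,2)] .
      then show False using psub[OF a(3)] by blast
    qed
  qed
  also have "(\<Sum>T\<in>(\<Union>T\<in>Bad. pieces T). en n \<mu> T) = (\<Sum>T\<in>Bad. \<Sum>U\<in>pieces T. en n \<mu> U)"
  proof (rule sum.UNION_disjoint[OF finB])
    show "\<forall>T\<in>Bad. finite (pieces T)" using finpc by simp
    show "\<forall>T\<in>Bad. \<forall>T'\<in>Bad. T \<noteq> T' \<longrightarrow> pieces T \<inter> pieces T' = {}"
    proof (intro ballI impI)
      fix T T' assume "T \<in> Bad" "T' \<in> Bad" "T \<noteq> T'"
      then have "T \<in> P" "T' \<in> P" "T \<noteq> T'" using BadP by auto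
      then have TT: "T \<inter> T' = {}" using v unfolding valid_def by blast
      show "pieces T \<inter> pieces T' = {}"
      proof (rule ccontr)
        assume "pieces T \<inter> pieces T' \<noteq> {}"
        then obtain U where "U \<in> pieces T" "U \<in> pieces T'" by blast
        then show False using psub[of U T] psub[of U T'] TT by blast
      qed
    qed
  qed
  also have "(\<Sum>T\<in>Bad. \<Sum>U\<in>pieces T. en n \<mu> U) \<ge> (\<Sum>T\<in>Bad. en n \<mu> T + c * real n * measure_pmf.prob \<mu> T)"
  proof (intro sum_mono)
    fix T assume "T \<in> Bad"
    then show "en n \<mu> T + c * real n * measure_pmf.prob \<mu> T \<le> (\<Sum>U\<in>pieces T. en n \<mu> U)"
      using f[of T] unfolding pen I_def pc_def by linarith
  qed
  moreover have "(\<Sum>T\<in>Bad. en n \<mu> T + c * real n * measure_pmf.prob \<mu> T) =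
      (\<Sum>T\<in>Bad. en n \<mu> T) + c * real n * (\<Sum>T\<in>Bad. measure_pmf.prob \<mu> T)"
    by (simp add: sum.distrib sum_distrib_left)
  moreover have "c * real n * (\<Sum>T\<in>Bad. measure_pmf.prob \<mu> T) \<ge> c * real n * (eps / 2)"
    using bm c by (intro mult_left_mono) (auto simp: Bad_def)
  moreover have "(\<Sum>T\<in>P. en n \<mu> T) = (\<Sum>T\<in>P - Bad. en n \<mu> T) + (\<Sum>T\<in>Bad. en n \<mu> T)"
    by (rule sum.subset_diff[OF BadP finP])
  ultimately have "(\<Sum>T\<in>P'. en n \<mu> T) \<ge> (\<Sum>T\<in>P. en n \<mu> T) + c * real n * (eps / 2)"
    by linarith
  then show ?thesis using valid' cardP' unfolding c_def by blast
qed




lemma iterate: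
  fixes \<mu> :: "(nat \<Rightarrow> 'a::finite) pmf"
  assumes supp: "set_pmf \<mu> \<subseteq> config n" and n: "n > 0" and k: "k > 0" and eps: "eps > 0"
  shows "\<forall>P. valid (config n) P \<longrightarrow>
     real n < (\<Sum>T\<in>P. en n \<mu> T) + real M * (c0 eps k CARD('a) * real n * (eps / 2)) \<longrightarrow>
     (\<exists>P'. valid (config n) P' \<and> card P' \<le> card P * (CARD('a) ^ k) ^ M \<and>
        (\<Sum>T\<in>badset eps k n \<mu> P'. measure_pmf.prob \<mu> T) < eps / 2)"
proof (induction M)
  case 0
  show ?case
  proof (intro allI impI)
    fix P assume v: "valid (config n) P" and lt: "real n < (\<Sum>T\<in>P. en n \<mu> T) + real 0 * (c0 eps k CARD('a) * real n * (eps / 2))"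
    have "(\<Sum>T\<in>P. en n \<mu> T) \<le> real n" using energy_le[OF v supp] .
    then show "\<exists>P'. valid (config n) P' \<and> card P' \<le> card P * (CARD('a) ^ k) ^ 0 \<and>
        (\<Sum>T\<in>badset eps k n \<mu> P'. measure_pmf.prob \<mu> T) < eps / 2" using lt by simp
  qed
next
  case (Suc M)
  show ?case
  proof (intro allI impI)
    fix P assume v: "valid (config n) P"
      and lt: "real n < (\<Sum>T\<in>P. en n \<mu> T) + real (Suc M) * (c0 eps k CARD('a) * real n * (eps / 2))"
    have q1: "(CARD('a) ^ k) ^ Suc M \<ge> 1" by simp
    show "\<exists>P'. valid (config n) P' \<and> card P' \<le> card P * (CARD('a) ^ k) ^ Suc M \<and>
        (\<Sum>T\<in>badset eps k n \<mu> P'. measure_pmf.prob \<mu> T) < eps / 2"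
    proof (cases "(\<Sum>T\<in>badset eps k n \<mu> P. measure_pmf.prob \<mu> T) < eps / 2")
      case True
      then show ?thesis using v q1 by (intro exI[of _ P]) simp
    next
      case False
      then obtain P1 where P1: "valid (config n) P1" "card P1 \<le> card P * CARD('a) ^ k"
        "(\<Sum>T\<in>P1. en n \<mu> T) \<ge> (\<Sum>T\<in>P. en n \<mu> T) + c0 eps k CARD('a) * real n * (eps / 2)"
        using refine_step[OF supp v n k eps] by force
      have "real n < (\<Sum>T\<in>P1. en n \<mu> T) + real M * (c0 eps k CARD('a) * real n * (eps / 2))"
      proof -
        have "real (Suc M) * (c0 eps k CARD('a) * real n * (eps / 2)) = c0 eps k CARD('a) * real n * (eps / 2) + real M * (c0 eps k CARD('a) * real n * (eps / 2))"
          by (simp add: distrib_right)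
        then show ?thesis using lt P1(3) by linarith
      qed
      then obtain P' where P': "valid (config n) P'" "card P' \<le> card P1 * (CARD('a) ^ k) ^ M"
        "(\<Sum>T\<in>badset eps k n \<mu> P'. measure_pmf.prob \<mu> T) < eps / 2"
        using Suc.IH P1(1) by blast
      have "card P' \<le> card P * CARD('a) ^ k * (CARD('a) ^ k) ^ M"
        using P'(2) P1(2) by (meson le_trans mult_le_mono1)
      then have "card P' \<le> card P * (CARD('a) ^ k) ^ Suc M" by (simp add: algebra_simps)
      then show ?thesis using P' by blast
    qed
  qed
qed




theorem corollary2p2:
  fixes eps :: real and k :: nat
  assumes "eps > 0" and "k \<ge> 2"
  shows "\<exists>\<eta>::real. \<eta> > 0 \<and>
    (\<forall>n::nat. real n > 1 / \<eta> \<longrightarrow>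
      (\<forall>\<mu> :: (nat \<Rightarrow> 'a::finite) pmf. set_pmf \<mu> \<subseteq> config n \<longrightarrow>
        (\<exists>(N::nat) (S :: nat \<Rightarrow> (nat \<Rightarrow> 'a) set).
           (\<forall>i<N. S i \<subseteq> config n \<and> is_state eps k n \<mu> (S i) \<and> measure_pmf.prob \<mu> (S i) \<ge> \<eta>) \<and>
           (\<forall>i<N. \<forall>j<N. i \<noteq> j \<longrightarrow> S i \<inter> S j = {}) \<and>
           (\<Sum>i<N. measure_pmf.prob \<mu> (S i)) \<ge> 1 - eps)))"
proof -
  have eps: "eps > 0" and k: "k > 0" using assms by auto
  define q where "q = CARD('a)"
  define \<delta> where "\<delta> = c0 eps k q * (eps / 2)"
  have \<delta>: "\<delta> > 0" using eps k by (simp add: \<delta>_def c0_def q_def)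
  define M where "M = nat \<lceil>1 / \<delta>\<rceil> + 1"
  have M: "real M * \<delta> > 1"
  proof -
    have "real M > 1 / \<delta>" unfolding M_def by linarith
    then show ?thesis using \<delta> by (simp add: field_simps)
  qed
  define K where "K = (q ^ k) ^ M"
  have K: "K \<ge> 1" by (simp add: K_def q_def)
  define \<eta> where "\<eta> = eps / (2 * real K)"
  have \<eta>: "\<eta> > 0" using eps K by (simp add: \<eta>_def)
  have "\<forall>n::nat. real n > 1 / \<eta> \<longrightarrow>
      (\<forall>\<mu> :: (nat \<Rightarrow> 'a::finite) pmf. set_pmf \<mu> \<subseteq> config n \<longrightarrow>
        (\<exists>(N::nat) (S :: nat \<Rightarrow> (nat \<Rightarrow> 'a) set).
           (\<forall>i<N. S i \<subseteq> config n \<and> is_state eps k n \<mu> (S i) \<and> measure_pmf.prob \<mu> (S i) \<ge> \<eta>) \<and>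
           (\<forall>i<N. \<forall>j<N. i \<noteq> j \<longrightarrow> S i \<inter> S j = {}) \<and>
           (\<Sum>i<N. measure_pmf.prob \<mu> (S i)) \<ge> 1 - eps))"
  proof (intro allI impI)
    fix n :: nat and \<mu> :: "(nat \<Rightarrow> 'a) pmf"
    assume nb: "real n > 1 / \<eta>" and supp: "set_pmf \<mu> \<subseteq> config n"
    have n: "n > 0" using nb \<eta>
      by (metis divide_pos_pos of_nat_0_less_iff order.strict_trans zero_less_one)
    define P0 where "P0 = {config n :: (nat \<Rightarrow> 'a) set}"
    have cne: "config n \<noteq> ({} :: (nat \<Rightarrow> 'a) set)" by (simp add: config_def PiE_eq_empty_iff)
    have v0: "valid (config n) P0" using cne by (simp add: valid_def P0_def)
    have "(\<Sum>T\<in>P0. en n \<mu> T) \<ge> 0" by (simp add: P0_def en_bounds)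
    moreover have "real n < real M * (real n * \<delta>)"
    proof -
      have "real n * 1 < real n * (real M * \<delta>)" using M n by (intro mult_strict_left_mono) auto
      then show ?thesis by (simp add: mult_ac)
    qed
    ultimately have "real n < (\<Sum>T\<in>P0. en n \<mu> T) + real M * (c0 eps k CARD('a) * real n * (eps / 2))"
      by (simp add: \<delta>_def q_def mult_ac)
    from iterate[OF supp n k eps, of M, rule_format, OF v0 this]
    obtain P where P: "valid (config n) P" "card P \<le> card P0 * (CARD('a) ^ k) ^ M"
       "(\<Sum>T\<in>badset eps k n \<mu> P. measure_pmf.prob \<mu> T) < eps / 2" by blast
    have "card P0 = 1" by (simp add: P0_def)
    then have P2: "card P \<le> K" using P(2) by (simp add: K_def q_def)
    have finP: "finite P" using P(1) by (simp add: valid_def)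
    define Good where "Good = {T\<in>P. is_state eps k n \<mu> T \<and> measure_pmf.prob \<mu> T \<ge> \<eta>}"
    define Bad where "Bad = badset eps k n \<mu> P"
    have GP: "Good \<subseteq> P" by (auto simp: Good_def)
    have finG: "finite Good" using GP finP finite_subset by blast
    have BO: "Bad \<subseteq> P - Good" by (auto simp: Bad_def badset_def Good_def)
    have small: "measure_pmf.prob \<mu> T < \<eta>" if "T \<in> P - Good - Bad" for T
    proof (cases "is_state eps k n \<mu> T")
      case True then show ?thesis using that by (auto simp: Good_def)
    next
      case False
      then have "\<not> measure_pmf.prob \<mu> T > 0" using that by (auto simp: Bad_def badset_def)
      then show ?thesis using \<eta> by simp
    qed
    have "(\<Sum>T\<in>P - Good - Bad. measure_pmf.prob \<mu> T) \<le> real (card (P - Good - Bad)) * \<eta>"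
      using small by (intro sum_bounded_above) (simp add: less_imp_le)
    also have "\<dots> \<le> real K * \<eta>"
    proof -
      have "P - Good - Bad \<subseteq> P" by blast
      then have "card (P - Good - Bad) \<le> card P" by (rule card_mono[OF finP])
      then have "card (P - Good - Bad) \<le> K" using P2 by linarith
      then show ?thesis using \<eta> by (intro mult_right_mono) auto
    qed
    also have "\<dots> = eps / 2" using K by (simp add: \<eta>_def)
    finally have s1: "(\<Sum>T\<in>P - Good - Bad. measure_pmf.prob \<mu> T) \<le> eps / 2" .
    have "(\<Sum>T\<in>P - Good. measure_pmf.prob \<mu> T) = (\<Sum>T\<in>P - Good - Bad. measure_pmf.prob \<mu> T) + (\<Sum>T\<in>Bad. measure_pmf.prob \<mu> T)"
      using finP BO by (intro sum.subset_diff) auto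
    moreover have "(\<Sum>T\<in>P. measure_pmf.prob \<mu> T) = (\<Sum>T\<in>P - Good. measure_pmf.prob \<mu> T) + (\<Sum>T\<in>Good. measure_pmf.prob \<mu> T)"
      by (rule sum.subset_diff[OF GP finP])
    moreover have "(\<Sum>T\<in>P. measure_pmf.prob \<mu> T) = 1" by (rule total_mass[OF P(1) supp])
    ultimately have gm1: "(\<Sum>T\<in>Good. measure_pmf.prob \<mu> T) \<ge> 1 - eps"
      using s1 P(3) unfolding Bad_def by linarith
    obtain h where h: "bij_betw h {0..<card Good} Good" using ex_bij_betw_nat_finite[OF finG] by blast
    have hG: "h i \<in> Good" if "i < card Good" for i using h that by (auto simp: bij_betw_def)
    show "\<exists>(N::nat) (S :: nat \<Rightarrow> (nat \<Rightarrow> 'a) set).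
           (\<forall>i<N. S i \<subseteq> config n \<and> is_state eps k n \<mu> (S i) \<and> measure_pmf.prob \<mu> (S i) \<ge> \<eta>) \<and>
           (\<forall>i<N. \<forall>j<N. i \<noteq> j \<longrightarrow> S i \<inter> S j = {}) \<and>
           (\<Sum>i<N. measure_pmf.prob \<mu> (S i)) \<ge> 1 - eps"
    proof (intro exI[of _ "card Good"] exI[of _ h] conjI allI impI)
      fix i assume i: "i < card Good"
      show "h i \<subseteq> config n" using hG[OF i] P(1) by (auto simp: Good_def valid_def)
      show "is_state eps k n \<mu> (h i)" "measure_pmf.prob \<mu> (h i) \<ge> \<eta>" using hG[OF i] by (auto simp: Good_def)
    next
      fix i j assume i: "i < card Good" and j: "j < card Good" and ij: "i \<noteq> j"
      have "h i \<noteq> h j" using h i j ij by (auto simp: bij_betw_def inj_on_def)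
      then show "h i \<inter> h j = {}" using hG[OF i] hG[OF j] P(1) by (auto simp: Good_def valid_def)
    next
      have "(\<Sum>i<card Good. measure_pmf.prob \<mu> (h i)) = (\<Sum>T\<in>Good. measure_pmf.prob \<mu> T)"
        using sum.reindex_bij_betw[OF h] by (simp add: atLeast0LessThan)
      then show "(\<Sum>i<card Good. measure_pmf.prob \<mu> (h i)) \<ge> 1 - eps" using gm1 by simp
    qed
  qed
  then show ?thesis using \<eta> by blast
qed


end
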